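(* Let $\mathcal{B}$ be a front on $\mathbb{N}$. There is a Borel map $S:2^{\mathcal{B}}\times[\mathbb{N}]^{\omega}\to[\mathbb{N}]^{\omega}$ such that for every infinite $x\subseteq\mathbb{N}$ and every $\mathcal{F}\subseteq\mathcal{B}$, $S(\mathcal{F},x)$ is an infinite subset of $x$ satisfying $[S(\mathcal{F},x)]^{<\omega}\cap\mathcal{B}\subseteq\mathcal{F}$ or $[S(\mathcal{F},x)]^{<\omega}\cap\mathcal{F}=\emptyset$.
   Context: For finite $s$ and $t\subseteq\mathbb{N}$, $s\sqsubseteq t$ means $s=t\cap\{0,\dots,n\}$ for some $n$. A front on $\mathbb{N}$ is a family $\mathcal{B}\subseteq[\mathbb{N}]^{<\omega}$ of pairwise $\sqsubseteq$-incomparable sets such that every infinite $y\subseteq\mathbb{N}$ has an initial segment in $\mathcal{B}$. $[\mathbb{N}]^\omega$ is the space of infinite subsets of $\mathbb{N}$ (as a subspace of $2^{\mathbb{N}}$), and $2^{\mathcal{B}}$ is the Cantor space of subsets of $\mathcal{B}$. *)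

theory Defs
  imports "HOL-Analysis.Analysis"
begin

definition init_seg :: "nat set \<Rightarrow> nat set \<Rightarrow> bool" where
  "init_seg s t \<longleftrightarrow> (\<exists>n. s = t \<inter> {..<n})"

definition is_front :: "nat set set \<Rightarrow> bool" where
  "is_front B \<longleftrightarrow>
     (\<forall>s\<in>B. finite s) \<and>
     (\<forall>s\<in>B. \<forall>t\<in>B. init_seg s t \<longrightarrow> s = t) \<and>
     (\<forall>y. infinite y \<longrightarrow> (\<exists>s\<in>B. init_seg s y))"

definition borel_of :: "'a topology \<Rightarrow> 'a measure" where
  "borel_of X = sigma (topspace X) {U. openin X U}"

text \<open>Cantor space 2^I, realised as functions I \<Rightarrow> bool (extensional outside I)
  with the product of discrete topologies.\<close>
definition cantor_top :: "'i set \<Rightarrow> ('i \<Rightarrow> bool) topology" where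
  "cantor_top I = product_topology (\<lambda>_. discrete_topology (UNIV :: bool set)) I"

text \<open>The space [N]^omega of infinite subsets of N, as a subspace of 2^N
  (subsets represented by their characteristic functions).\<close>
definition inf_subsets_top :: "(nat \<Rightarrow> bool) topology" where
  "inf_subsets_top = subtopology (cantor_top UNIV) {f. infinite {n. f n}}"

end

theory Submission
  imports Defs
begin

definition lt :: "nat set \<Rightarrow> nat set \<Rightarrow> bool" where "lt s u \<longleftrightarrow> (\<forall>a\<in>s. \<forall>b\<in>u. a < b)"
definition Tr :: "nat set set \<Rightarrow> nat set set" where "Tr B = {s. \<exists>b\<in>B. init_seg s b \<and> s \<noteq> b}"
definition Rl :: "nat set set \<Rightarrow> (nat set \<times> nat set) set" where
  "Rl B = {(t,s). s \<in> Tr B \<and> (\<exists>a. lt s {a} \<and> t = insert a s)}"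
definition ismin :: "nat \<Rightarrow> nat set \<Rightarrow> bool" where "ismin a z \<longleftrightarrow> a \<in> z \<and> (\<forall>b<a. b \<notin> z)"

type_synonym hfun = "nat set set \<Rightarrow> nat set \<Rightarrow> nat set"

definition stp :: "nat set \<Rightarrow> (nat \<Rightarrow> hfun) \<Rightarrow> nat set set \<Rightarrow> nat set \<Rightarrow> nat set" where
 "stp s G F z = (if z = {} then {} else if lt s {LEAST a. a \<in> z} then G (LEAST a. a \<in> z) F (z - {LEAST a. a \<in> z}) else {})"

primrec zseq :: "nat set \<Rightarrow> (nat \<Rightarrow> hfun) \<Rightarrow> nat set set \<Rightarrow> nat set \<Rightarrow> nat \<Rightarrow> nat set" where
 "zseq s G F x 0 = {a\<in>x. lt s {a}}"
| "zseq s G F x (Suc k) = stp s G F (zseq s G F x k)"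

definition col :: "nat set set \<Rightarrow> nat set \<Rightarrow> (nat \<Rightarrow> hfun) \<Rightarrow> nat set set \<Rightarrow> nat set \<Rightarrow> nat \<Rightarrow> bool" where
 "col B s G F x k = (\<forall>a. ismin a (zseq s G F x k) \<longrightarrow> (\<forall>v. finite v \<and> v \<subseteq> zseq s G F x (Suc k) \<and> lt (insert a s) v \<and> insert a s \<union> v \<in> B \<longrightarrow> insert a s \<union> v \<in> F))"

definition build :: "nat set set \<Rightarrow> nat set \<Rightarrow> (nat \<Rightarrow> hfun) \<Rightarrow> hfun" where
 "build B s G F x = {a. \<exists>k. ismin a (zseq s G F x k) \<and> (col B s G F x k \<longleftrightarrow> infinite {k. col B s G F x k})}"

definition Hstep :: "nat set set \<Rightarrow> (nat set \<Rightarrow> hfun) \<Rightarrow> nat set \<Rightarrow> hfun" where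
 "Hstep B h s = (if s \<in> Tr B then build B s (\<lambda>a. h (insert a s)) else (\<lambda>F x. x))"

definition H :: "nat set set \<Rightarrow> nat set \<Rightarrow> hfun" where "H B = wfrec (Rl B) (Hstep B)"

lemma lessThan_inter: "{..<m} \<inter> {..<n} = {..<min m (n::nat)}" by auto

lemma init_seg_trans: "init_seg a b \<Longrightarrow> init_seg b c \<Longrightarrow> init_seg a c"
  unfolding init_seg_def by (metis Int_assoc lessThan_inter)

lemma Tr_finite: "is_front B \<Longrightarrow> s \<in> Tr B \<Longrightarrow> finite s"
  unfolding Tr_def is_front_def init_seg_def by auto

lemma Tr_notin: "is_front B \<Longrightarrow> s \<in> Tr B \<Longrightarrow> s \<notin> B"
  unfolding Tr_def is_front_def by blast

lemma wf_Rl: assumes fr: "is_front B" shows "wf (Rl B)"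
proof -
  { fix f assume ch: "\<forall>i. (f (Suc i), f i) \<in> Rl B"
    have T: "f i \<in> Tr B" for i using ch by (auto simp: Rl_def)
    have "\<forall>i. \<exists>a. lt (f i) {a} \<and> f (Suc i) = insert a (f i)" using ch by (auto simp: Rl_def)
    then obtain a where a: "\<And>i. lt (f i) {a i} \<and> f (Suc i) = insert (a i) (f i)" by metis
    have mono: "f i \<subseteq> f j" if "i \<le> j" for i j
      using lift_Suc_mono_le[of f, OF _ that] a by blast
    define y where "y = (\<Union>i. f i)"
    have sub: "finite c \<Longrightarrow> c \<subseteq> y \<Longrightarrow> \<exists>i. c \<subseteq> f i" for c
    proof (induction c rule: finite_induct)
      case empty then show ?case by auto
    next
      case (insert x c)
      then obtain i j where "c \<subseteq> f i" "x \<in> f j" by (auto simp: y_def)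
      then show ?case using mono[of i "max i j"] mono[of j "max i j"] by auto
    qed
    have "infinite y"
    proof
      assume "finite y"
      then obtain i where "y \<subseteq> f i" using sub by blast
      moreover have "a i \<in> f (Suc i)" "f (Suc i) \<subseteq> y" using a[of i] by (auto simp: y_def)
      moreover have "a i \<notin> f i" using a[of i] by (auto simp: lt_def)
      ultimately show False by blast
    qed
    then obtain b where b: "b \<in> B" "init_seg b y" using fr unfolding is_front_def by blast
    then obtain m where m: "b = y \<inter> {..<m}" unfolding init_seg_def by blast
    then obtain i where i: "b \<subseteq> f i" using sub[of b] by auto
    have fy: "f i \<subseteq> y" by (auto simp: y_def)
    have bi: "b = f i \<inter> {..<m}" using m i fy by auto
    obtain b' m' where b': "b' \<in> B" "f i = b' \<inter> {..<m'}" "f i \<noteq> b'"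
      using T[of i] unfolding Tr_def init_seg_def by blast
    have "init_seg b b'" unfolding init_seg_def using bi b'(2)
      by (metis Int_assoc lessThan_inter)
    then have "b = b'" using fr b(1) b'(1) unfolding is_front_def by blast
    then have False using i b' by auto
  }
  then show ?thesis using wf_iff_no_infinite_down_chain by blast
qed


lemma build_cong:
  assumes h: "\<And>a. lt s {a} \<Longrightarrow> G a = G' a"
  shows "build B s G = build B s G'"
proof -
  have st: "stp s G F z = stp s G' F z" for F z by (simp add: stp_def h)
  have z: "zseq s G F x k = zseq s G' F x k" for F x k by (induction k) (simp_all add: st)
  show ?thesis by (simp add: build_def col_def z st fun_eq_iff)
qed

lemma H_unfold:
  assumes fr: "is_front B"
  shows "H B s = (if s \<in> Tr B then build B s (\<lambda>a. H B (insert a s)) else (\<lambda>F x. x))"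
proof -
  have "H B s = Hstep B (cut (H B) (Rl B) s) s"
    unfolding H_def by (rule wfrec[OF wf_Rl[OF fr]])
  also have "\<dots> = (if s \<in> Tr B then build B s (\<lambda>a. H B (insert a s)) else (\<lambda>F x. x))"
  proof (cases "s \<in> Tr B")
    case True
    have "build B s (\<lambda>a. cut (H B) (Rl B) s (insert a s)) = build B s (\<lambda>a. H B (insert a s))"
      by (rule build_cong) (rule cut_apply, use True in \<open>auto simp: Rl_def\<close>)
    then show ?thesis using True by (simp add: Hstep_def)
  qed (simp add: Hstep_def)
  finally show ?thesis .
qed

lemma stp_sub: "(\<And>a F z. lt s {a} \<Longrightarrow> G a F z \<subseteq> z) \<Longrightarrow> stp s G F z \<subseteq> z"
  unfolding stp_def by auto

lemma zseq_sub0: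
  assumes "\<And>a F z. lt s {a} \<Longrightarrow> G a F z \<subseteq> z"
  shows "zseq s G F x k \<subseteq> zseq s G F x 0"
proof (induction k)
  case (Suc k) then show ?case using stp_sub[of s G F, OF assms] by (metis order_trans zseq.simps(2))
qed simp

lemma build_sub:
  assumes "\<And>a F z. lt s {a} \<Longrightarrow> G a F z \<subseteq> z"
  shows "build B s G F x \<subseteq> x"
proof
  fix a assume "a \<in> build B s G F x"
  then obtain k where "a \<in> zseq s G F x k" by (auto simp: build_def ismin_def)
  moreover have "zseq s G F x k \<subseteq> zseq s G F x 0" by (rule zseq_sub0) (rule assms)
  ultimately show "a \<in> x" by auto
qed

lemma H_sub:
  assumes fr: "is_front B"
  shows "H B s F x \<subseteq> x"
proof -
  have "\<forall>F x. H B s F x \<subseteq> x"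
  proof (induction s rule: wf_induct[OF wf_Rl[OF fr]])
    case (1 s)
    show ?case
    proof (cases "s \<in> Tr B")
      case True
      have "\<And>a F z. lt s {a} \<Longrightarrow> H B (insert a s) F z \<subseteq> z"
        using 1 True by (auto simp: Rl_def)
      then show ?thesis using True by (simp add: H_unfold[OF fr] build_sub)
    qed (simp add: H_unfold[OF fr])
  qed
  then show ?thesis by blast
qed

definition homog :: "nat set set \<Rightarrow> nat set \<Rightarrow> nat set set \<Rightarrow> nat set \<Rightarrow> bool" where
  "homog B s F y \<longleftrightarrow> (\<forall>u. finite u \<and> u \<subseteq> y \<and> lt s u \<and> s \<union> u \<in> B \<longrightarrow> s \<union> u \<in> F) \<or>
                      (\<forall>u. finite u \<and> u \<subseteq> y \<and> lt s u \<and> s \<union> u \<in> B \<longrightarrow> s \<union> u \<notin> F)"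

lemma Tr_intro:
  assumes "finite u" "u \<noteq> {}" "lt s u" "s \<union> u \<in> B"
  shows "s \<in> Tr B"
proof -
  have m1: "Min u \<in> u" using assms Min_in by blast
  have m2: "\<And>b. b \<in> u \<Longrightarrow> Min u \<le> b" using assms by simp
  have "(s \<union> u) \<inter> {..<Min u} = s"
    proof
    show "(s \<union> u) \<inter> {..<Min u} \<subseteq> s" using m2 leD by blast
    show "s \<subseteq> (s \<union> u) \<inter> {..<Min u}" using m1 assms(3) by (auto simp: lt_def)
  qed
  moreover have "s \<noteq> s \<union> u" using assms by (auto simp: lt_def)
  ultimately show ?thesis unfolding Tr_def init_seg_def using assms(4) by blast
qed

lemma H_correct:
  assumes fr: "is_front B" and xinf0: "infinite x0"
  shows "infinite (H B s F x0) \<and> homog B s F (H B s F x0)"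
proof -
  have "\<forall>x. infinite x \<longrightarrow> infinite (H B s F x) \<and> homog B s F (H B s F x)"
  proof (induction s rule: wf_induct[OF wf_Rl[OF fr]])
    case (1 s)
    show ?case
    proof (cases "s \<in> Tr B")
      case False
      show ?thesis
      proof (intro allI impI)
        fix x :: "nat set" assume xinf: "infinite x"
        have Hx: "H B s F x = x" using False by (simp add: H_unfold[OF fr])
        have u0: "u = {}" if "finite u" "lt s u" "s \<union> u \<in> B" for u
          using Tr_intro[OF that(1) _ that(2,3)] False by blast
        have "homog B s F x"
          unfolding homog_def using u0 by (cases "s \<in> F") auto
        then show "infinite (H B s F x) \<and> homog B s F (H B s F x)" using Hx xinf by simp
      qed
    next
      case True
      define G where "G = (\<lambda>a. H B (insert a s))"
      have IH: "infinite (G a F z) \<and> homog B (insert a s) F (G a F z)" if "lt s {a}" "infinite z" for a z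
      proof -
        have "(insert a s, s) \<in> Rl B" using True that(1) by (auto simp: Rl_def)
        then show ?thesis using 1 that(2) by (simp add: G_def)
      qed
      have Gsub: "G a F' z \<subseteq> z" for a F' z using H_sub[OF fr] by (simp add: G_def)
      have Hx: "H B s F x = build B s G F x" for x using True by (simp add: H_unfold[OF fr] G_def)
      have sfin: "finite s" using Tr_finite[OF fr True] .
      have snB: "s \<notin> B" using Tr_notin[OF fr True] .
      show ?thesis
      proof (intro allI impI)
        fix x :: "nat set" assume xinf: "infinite x"
        define z where "z = zseq s G F x"
        have z0: "z 0 = {a\<in>x. lt s {a}}" by (simp add: z_def)
        have zS: "z (Suc k) = stp s G F (z k)" for k by (simp add: z_def)
        have z0inf: "infinite (z 0)"
        proof
          assume fz: "finite (z 0)"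
          have "x \<subseteq> z 0 \<union> (\<Union>b\<in>s. {..b})" by (auto simp: z0 lt_def not_less)
          moreover have "finite (\<Union>b\<in>s. {..b})" using sfin by auto
          ultimately show False using xinf fz finite_subset by blast
        qed
        define nk where "nk = (\<lambda>k. LEAST a. a \<in> z k)"
        have zk: "infinite (z k) \<and> z k \<subseteq> z 0" for k
        proof (induction k)
          case 0 then show ?case using z0inf by simp
        next
          case (Suc k)
          then have ne: "z k \<noteq> {}" by auto
          have a_in: "nk k \<in> z k" using ne unfolding nk_def by (metis LeastI ex_in_conv)
          then have lta: "lt s {nk k}" using Suc by (auto simp: z0)
          have eq: "z (Suc k) = G (nk k) F (z k - {nk k})" using ne lta by (simp add: zS stp_def nk_def)
          have "infinite (z k - {nk k})" using Suc by simp
          then have "infinite (z (Suc k))" using IH[OF lta] eq by simp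
          moreover have "z (Suc k) \<subseteq> z 0" using eq Gsub[of "nk k" F "z k - {nk k}"] Suc by blast
          ultimately show ?case by simp
        qed
        have nk_in: "nk k \<in> z k" for k
          using zk[of k] unfolding nk_def by (metis LeastI finite.emptyI ex_in_conv)
        have nk_le: "b \<in> z k \<Longrightarrow> nk k \<le> b" for b k unfolding nk_def by (rule Least_le)
        have lta: "lt s {nk k}" for k using nk_in[of k] zk[of k] by (auto simp: z0)
        have eq: "z (Suc k) = G (nk k) F (z k - {nk k})" for k
          using nk_in[of k] lta[of k] by (auto simp: zS stp_def nk_def)
        have zsub: "z (Suc k) \<subseteq> z k - {nk k}" for k using eq Gsub by metis
        have hom: "homog B (insert (nk k) s) F (z (Suc k))" for k
          using IH[OF lta[of k], of "z k - {nk k}"] zk[of k] eq[of k] by simp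
        have ismin_iff: "ismin a (z k) \<longleftrightarrow> a = nk k" for a k
        proof
          assume "ismin a (z k)"
          then have a1: "a \<in> z k" and a2: "\<forall>b<a. b \<notin> z k" by (auto simp: ismin_def)
          have "nk k \<le> a" using nk_le a1 by blast
          moreover have "\<not> nk k < a" using a2 nk_in by blast
          ultimately show "a = nk k" by linarith
        next
          assume "a = nk k"
          then show "ismin a (z k)" using nk_in[of k] nk_le[of _ k] unfolding ismin_def
            by (meson leD)
        qed
        define C where "C = (\<lambda>k. col B s G F x k)"
        have col_iff: "C k \<longleftrightarrow> (\<forall>v. finite v \<and> v \<subseteq> z (Suc k) \<and> lt (insert (nk k) s) v \<and> insert (nk k) s \<union> v \<in> B \<longrightarrow> insert (nk k) s \<union> v \<in> F)" for k
          unfolding C_def col_def z_def[symmetric] ismin_iff by simp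
        have nk_mono: "nk k < nk (Suc k)" for k
          using nk_in[of "Suc k"] zsub[of k] nk_le[of "nk (Suc k)" k] by force
        have sm: "strict_mono nk" using nk_mono strict_mono_Suc_iff by blast
        have zanti: "i \<le> j \<Longrightarrow> z j \<subseteq> z i" for i j
          using lift_Suc_antimono_le[of z] zsub by blast
        define cs where "cs = infinite {k. C k}"
        have yeq: "build B s G F x = nk ` {k. C k = cs}"
          unfolding build_def z_def[symmetric] C_def[symmetric] cs_def[symmetric] ismin_iff by auto
        have Kinf: "infinite {k. C k = cs}"
        proof (cases cs)
          case True then show ?thesis by (simp add: cs_def)
        next
          case False
          then have "finite {k. C k}" by (simp add: cs_def)
          moreover have "{k. C k = cs} = UNIV - {k. C k}" using False by auto
          ultimately show ?thesis by (simp add: Diff_infinite_finite)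
        qed
        have yinf: "infinite (nk ` {k. C k = cs})"
          using Kinf finite_imageD strict_mono_imp_inj_on[OF sm] inj_on_subset by blast
        have key: "s \<union> u \<in> F \<longleftrightarrow> cs"
          if u: "finite u" "u \<subseteq> nk ` {k. C k = cs}" "lt s u" "s \<union> u \<in> B" for u
        proof -
          have une: "u \<noteq> {}" using u(4) snB by auto
          define a where "a = Min u"
          have a_in: "a \<in> u" using une u(1) Min_in a_def by blast
          have a_le: "w \<in> u \<Longrightarrow> a \<le> w" for w using u(1) a_def by simp
          obtain i where i: "a = nk i" "C i = cs" using a_in u(2) by auto
          define v where "v = u - {a}"
          have vsub: "v \<subseteq> z (Suc i)"
          proof
            fix w assume w: "w \<in> v"
            then obtain j where j: "w = nk j" using u(2) v_def by auto
            have "a < w" using w a_le v_def by force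
            then have "i < j" using i(1) j sm strict_mono_less by blast
            then show "w \<in> z (Suc i)" using zanti[of "Suc i" j] nk_in[of j] j by auto
          qed
          have vlt: "lt (insert a s) v"
            using u(3) a_in a_le unfolding lt_def v_def by force
          have vfin: "finite v" using u(1) v_def by simp
          have vu: "insert a s \<union> v = s \<union> u" using a_in v_def by auto
          show ?thesis
          proof (cases "C i")
            case True
            then show ?thesis using col_iff[of i] vsub vlt vfin vu u(4) i by auto
          next
            case False
            then obtain v' where v': "finite v'" "v' \<subseteq> z (Suc i)" "lt (insert a s) v'"
              "insert a s \<union> v' \<in> B" "insert a s \<union> v' \<notin> F"
              using col_iff[of i] i(1) by auto
            have "insert a s \<union> v \<notin> F"
              using hom[of i] v' vsub vlt vfin vu u(4) unfolding homog_def i(1)[symmetric] by metis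
            then show ?thesis using vu False i by auto
          qed
        qed
        have "homog B s F (nk ` {k. C k = cs})"
          unfolding homog_def using key by (cases cs) auto
        then show "infinite (H B s F x) \<and> homog B s F (H B s F x)"
          using Hx yeq yinf by simp
      qed
    qed
  qed
  then show ?thesis using xinf0 by blast
qed

abbreviation mpred :: "'a measure \<Rightarrow> ('a \<Rightarrow> bool) \<Rightarrow> bool" where
  "mpred M P \<equiv> P \<in> measurable M (count_space (UNIV::bool set))"

lemma pred_const': "mpred M (\<lambda>x. K)"
  by (rule measurable_const) simp

lemma stp_mem: "n \<in> stp s G F z \<longleftrightarrow> (\<exists>a. ismin a z \<and> lt s {a} \<and> n \<in> G a F (z - {a}))"
proof (cases "z = {}")
  case True then show ?thesis by (simp add: stp_def ismin_def)
next
  case False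
  define m where "m = (LEAST a. a \<in> z)"
  have "m \<in> z" using False unfolding m_def by (metis LeastI ex_in_conv)
  moreover have "\<And>b. b \<in> z \<Longrightarrow> m \<le> b" unfolding m_def by (rule Least_le)
  ultimately have im: "ismin a z \<longleftrightarrow> a = m" for a unfolding ismin_def
    by (metis le_neq_implies_less leD)
  show ?thesis using False by (simp add: stp_def m_def[symmetric] im)
qed

lemma pred_ismin:
  assumes "\<And>n. mpred M (\<lambda>\<omega>. n \<in> Z \<omega>)"
  shows "mpred M (\<lambda>\<omega>. ismin a (Z \<omega>))"
  unfolding ismin_def
  by (intro pred_intros_logic pred_intros_countable pred_intros_imp' assms)

lemma H_meas:
  assumes fr: "is_front B" and Fm: "\<And>b. mpred M (\<lambda>\<omega>. b \<in> Fm \<omega>)"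
  shows "\<forall>Z :: 'a \<Rightarrow> nat set. (\<forall>n. mpred M (\<lambda>\<omega>. n \<in> Z \<omega>)) \<longrightarrow> (\<forall>n. mpred M (\<lambda>\<omega>. n \<in> H B s (Fm \<omega>) (Z \<omega>)))"
proof (induction s rule: wf_induct[OF wf_Rl[OF fr]])
  case (1 s)
  show ?case
  proof (cases "s \<in> Tr B")
    case False
    then show ?thesis by (simp add: H_unfold[OF fr])
  next
    case True
    define G where "G = (\<lambda>a. H B (insert a s))"
    have IH: "mpred M (\<lambda>\<omega>. n \<in> G a (Fm \<omega>) (Z \<omega>))"
      if "lt s {a}" "\<And>n. mpred M (\<lambda>\<omega>. n \<in> Z \<omega>)" for a Z n
    proof -
      have "(insert a s, s) \<in> Rl B" using True that(1) by (auto simp: Rl_def)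
      then show ?thesis using 1 that(2) by (simp add: G_def)
    qed
    have Hx: "H B s F x = build B s G F x" for F x using True by (simp add: H_unfold[OF fr] G_def)
    show ?thesis
    proof (intro allI impI)
      fix Z :: "'a \<Rightarrow> nat set" and n :: nat assume hZ: "\<forall>n. mpred M (\<lambda>\<omega>. n \<in> Z \<omega>)"
      define zz where "zz = (\<lambda>k \<omega>. zseq s G (Fm \<omega>) (Z \<omega>) k)"
      have zm: "mpred M (\<lambda>\<omega>. n \<in> zz k \<omega>)" for k n
      proof (induction k arbitrary: n)
        case 0
        show ?case unfolding zz_def using hZ by (simp add: pred_intros_conj2')
      next
        case (Suc k)
        have eq: "(\<lambda>\<omega>. n \<in> zz (Suc k) \<omega>) =
           (\<lambda>\<omega>. \<exists>a. ismin a (zz k \<omega>) \<and> (lt s {a} \<and> n \<in> G a (Fm \<omega>) (zz k \<omega> - {a})))"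
          by (simp add: zz_def stp_mem)
        have m2: "mpred M (\<lambda>\<omega>. n \<in> zz k \<omega> - {a})" for n a
          using Suc[of n] by (cases "n = a") (simp_all add: pred_const')
        show ?case unfolding eq
          by (intro pred_intros_countable pred_intros_logic pred_ismin Suc pred_intros_conj1' IH m2)
      qed
      define C where "C = (\<lambda>k \<omega>. col B s G (Fm \<omega>) (Z \<omega>) k)"
      have Cm: "mpred M (\<lambda>\<omega>. C k \<omega>)" for k
      proof -
        have gen: "(\<forall>v. finite v \<longrightarrow> Q v) \<longleftrightarrow> (\<forall>l. Q (set l))" for Q :: "nat set \<Rightarrow> bool"
          by (metis finite_list finite_set)
        have eq: "(\<lambda>\<omega>. C k \<omega>) = (\<lambda>\<omega>. \<forall>a. ismin a (zz k \<omega>) \<longrightarrow>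
            (\<forall>l. (\<forall>w\<in>set l. w \<in> zz (Suc k) \<omega>) \<and> lt (insert a s) (set l) \<and> insert a s \<union> set l \<in> B
               \<longrightarrow> insert a s \<union> set l \<in> Fm \<omega>))"
        proof (rule ext)
          fix \<omega>
          have "C k \<omega> = (\<forall>a. ismin a (zz k \<omega>) \<longrightarrow> (\<forall>v. finite v \<longrightarrow> ((\<forall>w\<in>v. w \<in> zz (Suc k) \<omega>) \<and> lt (insert a s) v \<and> insert a s \<union> v \<in> B
               \<longrightarrow> insert a s \<union> v \<in> Fm \<omega>)))"
            by (auto simp: C_def col_def zz_def subset_eq)
          then show "C k \<omega> = (\<forall>a. ismin a (zz k \<omega>) \<longrightarrow>
            (\<forall>l. (\<forall>w\<in>set l. w \<in> zz (Suc k) \<omega>) \<and> lt (insert a s) (set l) \<and> insert a s \<union> set l \<in> B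
               \<longrightarrow> insert a s \<union> set l \<in> Fm \<omega>))" by (simp only: gen)
        qed
        have fin: "mpred M (\<lambda>\<omega>. \<forall>w\<in>set l. w \<in> zz (Suc k) \<omega>)" for l
          by (intro pred_intros_finite zm) auto
        show ?thesis unfolding eq
          by (intro pred_intros_countable pred_intros_logic pred_ismin zm fin Fm pred_intros_conj2')
      qed
      have csm: "mpred M (\<lambda>\<omega>. infinite {k. C k \<omega>})"
        unfolding infinite_nat_iff_unbounded_le mem_Collect_eq
        by (intro pred_intros_countable pred_intros_conj1' Cm)
      have eq: "(\<lambda>\<omega>. n \<in> H B s (Fm \<omega>) (Z \<omega>)) =
          (\<lambda>\<omega>. \<exists>k. ismin n (zz k \<omega>) \<and> (C k \<omega> = infinite {k. C k \<omega>}))"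
        by (simp add: Hx build_def zz_def C_def)
      show "mpred M (\<lambda>\<omega>. n \<in> H B s (Fm \<omega>) (Z \<omega>))" unfolding eq
        by (intro pred_intros_countable pred_intros_logic pred_ismin zm Cm csm)
    qed
  qed
qed

lemma top_cantor_UNIV: "topspace (cantor_top (UNIV::nat set)) = UNIV"
  by (auto simp: cantor_top_def PiE_UNIV_domain)

lemma top_inf: "topspace inf_subsets_top = {f. infinite {n. f n}}"
  by (simp add: inf_subsets_top_def top_cantor_UNIV)

definition cyl :: "bool list \<Rightarrow> (nat \<Rightarrow> bool) set" where
  "cyl bs = {h \<in> topspace inf_subsets_top. \<forall>k<length bs. h k = bs ! k}"

lemma open_cyl:
  assumes "openin inf_subsets_top U"
  shows "U = (\<Union>bs\<in>{bs. cyl bs \<subseteq> U}. cyl bs)"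
proof
  show "(\<Union>bs\<in>{bs. cyl bs \<subseteq> U}. cyl bs) \<subseteq> U" by auto
  show "U \<subseteq> (\<Union>bs\<in>{bs. cyl bs \<subseteq> U}. cyl bs)"
  proof
    fix h assume hU: "h \<in> U"
    obtain V where V: "openin (cantor_top UNIV) V" "U = V \<inter> {f. infinite {n. f n}}"
      using assms unfolding inf_subsets_top_def openin_subtopology by blast
    have "h \<in> V" using hU V by auto
    then obtain W where W: "finite {i. W i \<noteq> UNIV}" "h \<in> Pi\<^sub>E UNIV W" "Pi\<^sub>E UNIV W \<subseteq> V"
      using V(1) unfolding cantor_top_def openin_product_topology_alt by auto
    obtain N where N: "{i. W i \<noteq> UNIV} \<subseteq> {..<N}" using W(1) finite_nat_iff_bounded by blast
    define bs where "bs = map h [0..<N]"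
    have "cyl bs \<subseteq> U"
    proof
      fix h' assume h': "h' \<in> cyl bs"
      have hi: "h' i \<in> W i" for i
      proof (cases "W i = UNIV")
        case False
        then have "i < N" using N by auto
        then have "h' i = h i" using h' by (auto simp: cyl_def bs_def)
        then show ?thesis using W(2) by (auto simp: PiE_UNIV_domain)
      qed simp
      have "h' \<in> Pi\<^sub>E UNIV W" using hi by (simp add: PiE_UNIV_domain Pi_iff)
      then show "h' \<in> U" using W(3) V(2) h' by (auto simp: cyl_def top_inf)
    qed
    moreover have "h \<in> cyl bs" using hU V(2) by (auto simp: cyl_def bs_def top_inf)
    ultimately show "h \<in> (\<Union>bs\<in>{bs. cyl bs \<subseteq> U}. cyl bs)" by blast
  qed
qed

theorem mainTheorem7:
  assumes "is_front B"
  shows "\<exists>S :: nat set set \<Rightarrow> nat set \<Rightarrow> nat set.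
    (\<lambda>(f, g). (\<lambda>n. n \<in> S {b\<in>B. f b} {n. g n}))
      \<in> borel_of (prod_topology (cantor_top B) inf_subsets_top) \<rightarrow>\<^sub>M borel_of inf_subsets_top
    \<and> (\<forall>x F. infinite x \<and> F \<subseteq> B \<longrightarrow>
         S F x \<subseteq> x \<and> infinite (S F x) \<and>
         ({s. finite s \<and> s \<subseteq> S F x} \<inter> B \<subseteq> F \<or>
          {s. finite s \<and> s \<subseteq> S F x} \<inter> F = {}))"
proof -
  define S where "S = (\<lambda>F x. H B {} F x)"
  define X where "X = prod_topology (cantor_top B) inf_subsets_top"
  define M where "M = borel_of X"
  have opsub: "{U. openin X U} \<subseteq> Pow (topspace X)" using openin_subset by blast
  have spM: "space M = topspace X" and setsM: "sets M = sigma_sets (topspace X) {U. openin X U}"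
    by (simp_all add: M_def borel_of_def opsub)
  have open_pred: "mpred M P" if "openin X {\<omega> \<in> topspace X. P \<omega>}" for P
    unfolding pred_def spM setsM using that by (intro sigma_sets.Basic) simp
  have opT: "openin (discrete_topology (UNIV::bool set)) {True}" by simp
  have cm1: "continuous_map X (discrete_topology UNIV) (\<lambda>\<omega>. fst \<omega> b)" if "b \<in> B" for b
  proof -
    have "continuous_map X (discrete_topology UNIV) ((\<lambda>f. f b) \<circ> fst)"
      unfolding X_def
      by (rule continuous_map_compose[OF continuous_map_fst])
         (use continuous_map_product_projection[OF that, of "\<lambda>_. discrete_topology UNIV"] in \<open>simp add: cantor_top_def\<close>)
    then show ?thesis by (simp add: comp_def)
  qed
  have cm2: "continuous_map X (discrete_topology UNIV) (\<lambda>\<omega>. snd \<omega> n)" for n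
  proof -
    have "continuous_map inf_subsets_top (discrete_topology UNIV) (\<lambda>f. f n)"
      unfolding inf_subsets_top_def
      by (rule continuous_map_from_subtopology)
         (use continuous_map_product_projection[of n UNIV "\<lambda>_. discrete_topology UNIV"] in \<open>simp add: cantor_top_def\<close>)
    then have "continuous_map X (discrete_topology UNIV) ((\<lambda>f. f n) \<circ> snd)"
      unfolding X_def by (rule continuous_map_compose[OF continuous_map_snd])
    then show ?thesis by (simp add: comp_def)
  qed
  have Fmeas: "mpred M (\<lambda>\<omega>. b \<in> {b\<in>B. fst \<omega> b})" for b
  proof (cases "b \<in> B")
    case True
    have "openin X {\<omega> \<in> topspace X. fst \<omega> b \<in> {True}}"
      by (rule openin_continuous_map_preimage[OF cm1[OF True] opT])
    then show ?thesis using True by (intro open_pred) simp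
  next
    case False then show ?thesis by (simp add: pred_const')
  qed
  have Zmeas: "mpred M (\<lambda>\<omega>. n \<in> {n. snd \<omega> n})" for n
  proof -
    have "openin X {\<omega> \<in> topspace X. snd \<omega> n \<in> {True}}"
      by (rule openin_continuous_map_preimage[OF cm2 opT])
    then show ?thesis by (intro open_pred) simp
  qed
  have meas: "mpred M (\<lambda>\<omega>. n \<in> S {b\<in>B. fst \<omega> b} {n. snd \<omega> n})" for n
  proof -
    have "(\<forall>n. mpred M (\<lambda>\<omega>. n \<in> {n. snd \<omega> n})) \<longrightarrow>
      (\<forall>n. mpred M (\<lambda>\<omega>. n \<in> H B {} {b\<in>B. fst \<omega> b} {n. snd \<omega> n}))"
      using H_meas[OF assms Fmeas, of "{}", THEN spec, of "\<lambda>\<omega>. {n. snd \<omega> n}"] .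
    then show ?thesis using Zmeas unfolding S_def by blast
  qed
  define \<Phi> where "\<Phi> = (\<lambda>\<omega>. \<lambda>n. n \<in> S {b\<in>B. fst \<omega> b} {n. snd \<omega> n})"
  have Phi_eq: "(\<lambda>(f, g). (\<lambda>n. n \<in> S {b\<in>B. f b} {n. g n})) = \<Phi>"
    by (auto simp: \<Phi>_def fun_eq_iff)
  have Sinf: "infinite (S F x)" "S F x \<subseteq> x" "homog B {} F (S F x)" if "infinite x" for F x
    using H_correct[OF assms that, of "{}" F] H_sub[OF assms] by (auto simp: S_def)
  have Phi_sp: "\<Phi> \<omega> \<in> topspace inf_subsets_top" if "\<omega> \<in> space M" for \<omega>
  proof -
    have "infinite {n. snd \<omega> n}" using that by (auto simp: spM X_def top_inf)
    then show ?thesis using Sinf(1) by (simp add: top_inf \<Phi>_def)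
  qed
  have "\<Phi> \<in> M \<rightarrow>\<^sub>M borel_of inf_subsets_top"
    unfolding borel_of_def
  proof (rule measurable_measure_of)
    show "{U. openin inf_subsets_top U} \<subseteq> Pow (topspace inf_subsets_top)"
      using openin_subset by blast
    show "\<Phi> \<in> space M \<rightarrow> topspace inf_subsets_top" using Phi_sp by blast
    fix U assume "U \<in> {U. openin inf_subsets_top U}"
    then have U: "U = (\<Union>bs\<in>{bs. cyl bs \<subseteq> U}. cyl bs)" using open_cyl by blast
    have piece: "\<Phi> -` cyl bs \<inter> space M \<in> sets M" for bs
    proof -
      have "\<Phi> -` cyl bs \<inter> space M = {\<omega> \<in> space M. \<forall>k. k < length bs \<longrightarrow>
              (k \<in> S {b\<in>B. fst \<omega> b} {n. snd \<omega> n}) = bs ! k}"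
        using Phi_sp by (auto simp: cyl_def \<Phi>_def)
      also have "\<dots> \<in> sets M"
        unfolding pred_def[symmetric]
        by (intro pred_intros_countable pred_intros_imp' pred_intros_logic meas pred_const')
      finally show ?thesis .
    qed
    have "\<Phi> -` U \<inter> space M = (\<Union>bs\<in>{bs. cyl bs \<subseteq> U}. \<Phi> -` cyl bs \<inter> space M)"
      by (subst U) auto
    also have "\<dots> \<in> sets M" using piece by (intro countable_Un_Int(1))
    finally show "\<Phi> -` U \<inter> space M \<in> sets M" .
  qed
  moreover have "\<forall>x F. infinite x \<and> F \<subseteq> B \<longrightarrow>
         S F x \<subseteq> x \<and> infinite (S F x) \<and>
         ({s. finite s \<and> s \<subseteq> S F x} \<inter> B \<subseteq> F \<or>
          {s. finite s \<and> s \<subseteq> S F x} \<inter> F = {})"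
  proof (intro allI impI)
    fix x :: "nat set" and F :: "nat set set" assume xF: "infinite x \<and> F \<subseteq> B"
    have xi: "infinite x" using xF by simp
    have h: "homog B {} F (S F x)" by (rule Sinf(3)[OF xi])
    have "{s. finite s \<and> s \<subseteq> S F x} \<inter> B \<subseteq> F \<or> {s. finite s \<and> s \<subseteq> S F x} \<inter> F = {}"
    proof -
      have h': "(\<forall>u. finite u \<and> u \<subseteq> S F x \<and> u \<in> B \<longrightarrow> u \<in> F) \<or>
                (\<forall>u. finite u \<and> u \<subseteq> S F x \<and> u \<in> B \<longrightarrow> u \<notin> F)"
        using h unfolding homog_def lt_def by simp
      then show ?thesis
      proof
        assume "\<forall>u. finite u \<and> u \<subseteq> S F x \<and> u \<in> B \<longrightarrow> u \<in> F"
        then have "{s. finite s \<and> s \<subseteq> S F x} \<inter> B \<subseteq> F" by auto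
        then show ?thesis ..
      next
        assume a: "\<forall>u. finite u \<and> u \<subseteq> S F x \<and> u \<in> B \<longrightarrow> u \<notin> F"
        have "{s. finite s \<and> s \<subseteq> S F x} \<inter> F = {}"
        proof (rule equals0I)
          fix t assume "t \<in> {s. finite s \<and> s \<subseteq> S F x} \<inter> F"
          then have "finite t" "t \<subseteq> S F x" "t \<in> F" by auto
          moreover have "t \<in> B" using \<open>t \<in> F\<close> xF by auto
          ultimately show False using a by simp
        qed
        then show ?thesis ..
      qed
    qed
    then show "S F x \<subseteq> x \<and> infinite (S F x) \<and>
         ({s. finite s \<and> s \<subseteq> S F x} \<inter> B \<subseteq> F \<or> {s. finite s \<and> s \<subseteq> S F x} \<inter> F = {})"
      using Sinf(1,2)[OF xi] by simp
  qed
  ultimately have fin: "\<Phi> \<in> M \<rightarrow>\<^sub>M borel_of inf_subsets_top \<and> (\<forall>x F. infinite x \<and> F \<subseteq> B \<longrightarrow>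
         S F x \<subseteq> x \<and> infinite (S F x) \<and>
         ({s. finite s \<and> s \<subseteq> S F x} \<inter> B \<subseteq> F \<or>
          {s. finite s \<and> s \<subseteq> S F x} \<inter> F = {}))" by (rule conjI)
  show ?thesis
    apply (rule exI[of _ S])
    unfolding Phi_eq
    using fin unfolding M_def X_def .
qed

end
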